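(* Define $\alpha,\beta:[0,2\pi]\to\mathbb{R}^3$ and $\gamma:[0,\pi]\to\mathbb{R}^3$ by $\alpha(t)=(\cos t,\sin t,1)$, $\beta(t)=(\cos t,\sin t,-1)$, $\gamma(t)=\big(2\cos(2t)-1,\ 2\sin(2t),\ \tfrac98\cos t-\tfrac18\cos(3t)\big)$, and let $C=\operatorname{conv}\big(\alpha([0,2\pi])\cup\beta([0,2\pi])\cup\gamma([0,\pi])\big)\subseteq\mathbb{R}^3$. Then the cone $\mathcal{K}=\operatorname{cone}(C\times\{1\})\subseteq\mathbb{R}^4$ is not amenable.
   Context: $\operatorname{cone}S=\{\lambda x:x\in S,\lambda\ge0\}$. A face of a closed convex cone $\mathcal{K}$ is a closed convex subset $\mathcal{F}\subseteq\mathcal{K}$ such that whenever $x,y\in\mathcal{K}$ and $\alpha x+(1-\alpha)y\in\mathcal{F}$ for some $\alpha\in(0,1)$, then $x,y\in\mathcal{F}$. $\mathcal{K}$ is amenable if for every face $\mathcal{F}$ there exists $\kappa>0$ with $\operatorname{dist}(x,\mathcal{F})\le\kappa\operatorname{dist}(x,\mathcal{K})$ for all $x\in\operatorname{span}\mathcal{F}$. *)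

theory Defs
  imports "HOL-Analysis.Analysis"
begin

definition cone_of :: "'a::real_vector set \<Rightarrow> 'a set" where
  "cone_of S = {c *\<^sub>R x | c x. x \<in> S \<and> c \<ge> 0}"

definition is_face :: "'a::real_normed_vector set \<Rightarrow> 'a set \<Rightarrow> bool" where
  "is_face F K \<longleftrightarrow> closed F \<and> convex F \<and> F \<subseteq> K \<and>
     (\<forall>x\<in>K. \<forall>y\<in>K. \<forall>a. 0 < a \<and> a < 1 \<and> a *\<^sub>R x + (1 - a) *\<^sub>R y \<in> F \<longrightarrow> x \<in> F \<and> y \<in> F)"

definition amenable :: "'a::real_normed_vector set \<Rightarrow> bool" where
  "amenable K \<longleftrightarrow> (\<forall>F. is_face F K \<longrightarrow>
     (\<exists>\<kappa>>0. \<forall>x\<in>span F. infdist x F \<le> \<kappa> * infdist x K))"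

definition alpha_curve :: "real \<Rightarrow> real \<times> real \<times> real" where
  "alpha_curve t = (cos t, sin t, 1)"

definition beta_curve :: "real \<Rightarrow> real \<times> real \<times> real" where
  "beta_curve t = (cos t, sin t, -1)"

definition gamma_curve :: "real \<Rightarrow> real \<times> real \<times> real" where
  "gamma_curve t = (2 * cos (2 * t) - 1, 2 * sin (2 * t), 9/8 * cos t - 1/8 * cos (3 * t))"

definition C_set :: "(real \<times> real \<times> real) set" where
  "C_set = convex hull (alpha_curve ` {0..2*pi} \<union> beta_curve ` {0..2*pi} \<union> gamma_curve ` {0..pi})"

end

theory Submission
  imports Defs
begin

definition pxy :: "real \<times> real \<times> real \<Rightarrow> real \<times> real" where
  "pxy p = (fst p, fst (snd p))"

definition pz :: "real \<times> real \<times> real \<Rightarrow> real" where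
  "pz p = snd (snd p)"

definition Gen :: "(real \<times> real \<times> real) set" where
  "Gen = alpha_curve ` {0..2*pi} \<union> beta_curve ` {0..2*pi} \<union> gamma_curve ` {0..pi}"

lemma gamma_z: "pz (gamma_curve t) = (3 * cos t - cos t ^ 3) / 2"
  unfolding pz_def gamma_curve_def snd_conv cos_treble_cos by (simp add: field_simps)

lemma gamma_z_le: "pz (gamma_curve t) \<le> 1"
proof -
  have c: "-1 \<le> cos t" by simp
  have "0 \<le> (cos t - 1)^2 * (cos t + 2)" using c by (intro mult_nonneg_nonneg zero_le_power2) linarith
  then show ?thesis unfolding gamma_z by (simp add: power2_eq_square power3_eq_cube algebra_simps)
qed

lemma Gen_z: "p \<in> Gen \<Longrightarrow> pz p \<le> 1"
  unfolding Gen_def using gamma_z_le by (auto simp: pz_def alpha_curve_def beta_curve_def)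

lemma Gen_z1: assumes "p \<in> Gen" "pz p = 1" shows "norm (pxy p) \<le> 1"
proof -
  { fix t assume p: "p = gamma_curve t"
    have c: "-1 \<le> cos t" "cos t \<le> 1" by simp_all
    have "(cos t - 1)^2 * (cos t + 2) = 0"
      using assms(2) unfolding p gamma_z by (simp add: power2_eq_square power3_eq_cube algebra_simps)
    then have "cos t = 1" using c by auto
    then have "sin t ^ 2 = 0" by (simp add: sin_squared_eq)
    then have "sin t = 0" by simp
    have "cos (2*t) = 1" using \<open>cos t = 1\<close> \<open>sin t = 0\<close> by (simp add: cos_double)
    moreover have "sin (2*t) = 0" using \<open>sin t = 0\<close> by (simp add: sin_double)
    ultimately have ?thesis by (simp add: p gamma_curve_def pxy_def)
  }
  moreover
  { fix t assume p: "p = alpha_curve t"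
    have ?thesis by (simp add: p alpha_curve_def pxy_def norm_Pair)
  }
  ultimately show ?thesis using assms unfolding Gen_def by (auto simp: beta_curve_def pz_def)
qed

lemma C_z: "p \<in> C_set \<Longrightarrow> pz p \<le> 1"
proof -
  have "convex {p. pz p \<le> 1}"
    unfolding convex_def pz_def by (auto intro: convex_bound_le)
  then have "C_set \<subseteq> {p. pz p \<le> 1}"
    unfolding C_set_def Gen_def[symmetric] by (intro hull_minimal) (auto simp: Gen_z)
  then show "p \<in> C_set \<Longrightarrow> pz p \<le> 1" by auto
qed

lemma C_z1:
  assumes pC: "p \<in> C_set" and pz1: "pz p = 1"
  shows "norm (pxy p) \<le> 1"
proof -
  obtain S u where S: "finite S" "S \<subseteq> Gen" "\<forall>x\<in>S. 0 \<le> u x" "sum u S = 1"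
    and pe: "(\<Sum>v\<in>S. u v *\<^sub>R v) = p"
    using pC unfolding C_set_def Gen_def[symmetric] convex_hull_explicit by blast
  have zs: "pz p = (\<Sum>v\<in>S. u v * pz v)"
    unfolding pe[symmetric] by (simp add: pz_def snd_sum)
  have xys: "pxy p = (\<Sum>v\<in>S. u v *\<^sub>R pxy v)"
    unfolding pe[symmetric] by (simp add: pxy_def fst_sum snd_sum prod_eq_iff)
  have "(\<Sum>v\<in>S. u v * (1 - pz v)) = sum u S - (\<Sum>v\<in>S. u v * pz v)"
    by (simp add: algebra_simps sum_subtractf)
  also have "\<dots> = 0" using S(4) zs pz1 by simp
  finally have eq0: "(\<Sum>v\<in>S. u v * (1 - pz v)) = 0" .
  have nn: "\<forall>v\<in>S. 0 \<le> u v * (1 - pz v)"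
  proof
    fix v assume v: "v \<in> S"
    then have "0 \<le> u v" "pz v \<le> 1" using S(2,3) Gen_z[of v] by auto
    then show "0 \<le> u v * (1 - pz v)" by simp
  qed
  have z0: "\<forall>v\<in>S. u v * (1 - pz v) = 0"
    using sum_nonneg_eq_0_iff[OF S(1), of "\<lambda>v. u v * (1 - pz v)"] nn eq0 by simp
  have "norm (pxy p) \<le> (\<Sum>v\<in>S. norm (u v *\<^sub>R pxy v))"
    unfolding xys by (rule norm_sum)
  also have "\<dots> \<le> (\<Sum>v\<in>S. u v)"
  proof (rule sum_mono)
    fix v assume v: "v \<in> S"
    show "norm (u v *\<^sub>R pxy v) \<le> u v"
    proof (cases "u v = 0")
      case False
      then have "pz v = 1" using z0 v by auto
      then have "norm (pxy v) \<le> 1" using Gen_z1[of v] S(2) v by auto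
      then show ?thesis using S(3) v by (simp add: mult_left_le)
    qed simp
  qed
  finally show ?thesis using S(4) by simp
qed

lemma disk_C:
  assumes "norm (a, b) \<le> (1::real)"
  shows "(a, b, 1) \<in> C_set"
proof -
  have ab: "a^2 + b^2 \<le> 1" using assms by (simp add: norm_Pair)
  have a1: "a^2 \<le> 1" using ab zero_le_power2[of b] by linarith
  define h where "h = sqrt (1 - a^2)"
  have h0: "0 \<le> h" and hsq: "h^2 = 1 - a^2" using a1 by (auto simp: h_def)
  have "\<bar>b\<bar>^2 \<le> 1 - a^2" using ab by simp
  then have bh: "\<bar>b\<bar> \<le> h" unfolding h_def by (rule real_le_rsqrt)
  have circ: "(a, y, 1) \<in> C_set" if yy: "a^2 + y^2 = 1" for y
  proof -
    obtain t where t: "0 \<le> t" "t < 2*pi" "a = cos t" "y = sin t"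
      using sincos_total_2pi[OF yy] by blast
    have e: "(a, y, 1) = alpha_curve t" by (simp add: alpha_curve_def t)
    have "alpha_curve t \<in> Gen" unfolding Gen_def using t(1,2) by auto
    then have "(a, y, 1) \<in> Gen" using e by simp
    then show ?thesis unfolding C_set_def Gen_def[symmetric] by (rule hull_inc)
  qed
  have P: "(a, h, 1) \<in> C_set" by (rule circ) (simp add: hsq)
  have M: "(a, -h, 1) \<in> C_set" by (rule circ) (simp add: hsq)
  show ?thesis
  proof (cases "h = 0")
    case True
    then have "b = 0" using bh by simp
    then show ?thesis using P True by simp
  next
    case False
    define u where "u = (1 + b / h) / 2"
    have hp: "h > 0" using h0 False by simp
    have "-h \<le> b" "b \<le> h" using bh by auto
    then have "b / h \<le> 1" "-1 \<le> b / h" using hp by (simp_all add: pos_divide_le_eq pos_le_divide_eq)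
    then have u0: "0 \<le> u" "u \<le> 1" by (simp_all add: u_def)
    have ub: "(2*u - 1) * h = b" using hp unfolding u_def by (simp add: field_simps)
    have "u *\<^sub>R (a, h, 1) + (1 - u) *\<^sub>R (a, -h, 1) \<in> C_set"
    proof -
      have cc: "convex C_set" unfolding C_set_def by (rule convex_convex_hull)
      show ?thesis by (rule convexD[OF cc P M]) (use u0 in auto)
    qed
    moreover have "u *\<^sub>R (a, h, (1::real)) + (1 - u) *\<^sub>R (a, -h, 1) = (a, b, 1)"
    proof -
      have e1: "u*h + (1-u)*(-h) = (2*u-1)*h" by (simp add: algebra_simps)
      have e2: "u*a + (1-u)*a = a" by (simp add: algebra_simps)
      show ?thesis using e1 e2 ub by simp
    qed
    ultimately show ?thesis by simp
  qed
qed


lemma pz_simps[simp]: "pz (x + y) = pz x + pz y" "pz (c *\<^sub>R x) = c * pz x"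
  "pz (x - y) = pz x - pz y" "pz 0 = 0" "pz (a, b, z) = z"
  by (simp_all add: pz_def)

lemma pxy_simps[simp]: "pxy (x + y) = pxy x + pxy y" "pxy (c *\<^sub>R x) = c *\<^sub>R pxy x"
  "pxy (x - y) = pxy x - pxy y" "pxy 0 = 0" "pxy (a, b, z) = (a, b)"
  by (simp_all add: pxy_def zero_prod_def)

abbreviation KK :: "((real \<times> real \<times> real) \<times> real) set" where
  "KK \<equiv> cone_of (C_set \<times> {1::real})"

definition FF :: "((real \<times> real \<times> real) \<times> real) set" where
  "FF = {X. pz (fst X) = snd X \<and> norm (pxy (fst X)) \<le> snd X}"

lemma K_mem: "X \<in> KK \<Longrightarrow> \<exists>c p. p \<in> C_set \<and> 0 \<le> c \<and> X = (c *\<^sub>R p, c)"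
  unfolding cone_of_def by auto

lemma K_z: assumes "X \<in> KK" shows "pz (fst X) \<le> snd X"
proof -
  obtain c p where "p \<in> C_set" "0 \<le> c" "X = (c *\<^sub>R p, c)" using K_mem[OF assms] by blast
  moreover have "pz p \<le> 1" using C_z \<open>p \<in> C_set\<close> by blast
  ultimately show ?thesis by (simp add: mult_left_le)
qed

lemma K_F: assumes "X \<in> KK" "pz (fst X) = snd X" shows "X \<in> FF"
proof -
  obtain c p where cp: "p \<in> C_set" "0 \<le> c" "X = (c *\<^sub>R p, c)" using K_mem[OF assms(1)] by blast
  show ?thesis
  proof (cases "c = 0")
    case True
    then show ?thesis using cp by (simp add: FF_def)
  next
    case False
    then have "pz p = 1" using assms(2) cp by simp
    then have "norm (pxy p) \<le> 1" using C_z1 cp(1) by blast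
    then have "c * norm (pxy p) \<le> c" using cp(2) by (simp add: mult_left_le)
    then show ?thesis using cp \<open>pz p = 1\<close> by (simp add: FF_def)
  qed
qed

lemma F_K: "FF \<subseteq> KK"
proof
  fix X assume X: "X \<in> FF"
  obtain a b z w where Xe: "X = ((a, b, z), w)" by (metis prod.collapse)
  have zw: "z = w" and nw: "norm (a, b) \<le> w" using X Xe by (auto simp: FF_def)
  have w0: "0 \<le> w" using nw norm_ge_zero order_trans by blast
  show "X \<in> KK"
  proof (cases "w = 0")
    case True
    then have "a = 0" "b = 0" using nw by (auto simp: zero_prod_def)
    moreover have "((1::real), (0::real), (1::real)) \<in> C_set" by (rule disk_C) (simp add: norm_Pair)
    moreover have "X = 0 *\<^sub>R (((1::real), (0::real), (1::real)), (1::real))"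
      using Xe zw True \<open>a = 0\<close> \<open>b = 0\<close> by simp
    ultimately show ?thesis unfolding cone_of_def by blast
  next
    case False
    then have wp: "w > 0" using w0 by simp
    have "norm (a / w, b / w) = norm (a, b) / w"
    proof -
      have e: "(a / w, b / w) = (1 / w) *\<^sub>R (a, b)" by simp
      have "norm ((1 / w) *\<^sub>R (a, b)) = norm (a, b) / w" using wp by (simp only: norm_scaleR) simp
      then show ?thesis unfolding e .
    qed
    also have "\<dots> \<le> 1" using nw wp by simp
    finally have "(a / w, b / w, 1) \<in> C_set" by (rule disk_C)
    moreover have "X = w *\<^sub>R ((a / w, b / w, 1), 1)" using Xe zw wp by simp
    ultimately show ?thesis unfolding cone_of_def using w0 by blast
  qed
qed

lemma F_closed: "closed FF"
  unfolding FF_def pz_def pxy_def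
  by (intro closed_Collect_conj closed_Collect_eq closed_Collect_le continuous_intros)

lemma F_convex: "convex FF"
proof (rule convexI)
  fix x y :: "(real \<times> real \<times> real) \<times> real" and u v :: real
  assume x: "x \<in> FF" and y: "y \<in> FF" and uv0: "0 \<le> u" "0 \<le> v" "u + v = 1"
  then have uv: "0 \<le> u \<and> 0 \<le> v \<and> u + v = 1" by simp
  have "norm (u *\<^sub>R pxy (fst x) + v *\<^sub>R pxy (fst y)) \<le> u * norm (pxy (fst x)) + v * norm (pxy (fst y))"
    using uv by (metis abs_of_nonneg norm_scaleR norm_triangle_ineq)
  also have "\<dots> \<le> u * snd x + v * snd y"
    using x y uv by (intro add_mono mult_left_mono) (auto simp: FF_def)
  finally show "u *\<^sub>R x + v *\<^sub>R y \<in> FF" using x y by (simp add: FF_def)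
qed

lemma F_face: "is_face FF KK"
proof -
  have "\<forall>x\<in>KK. \<forall>y\<in>KK. \<forall>a. 0 < a \<and> a < 1 \<and> a *\<^sub>R x + (1 - a) *\<^sub>R y \<in> FF \<longrightarrow> x \<in> FF \<and> y \<in> FF"
  proof (intro ballI allI impI)
  fix x y a assume x: "x \<in> KK" and y: "y \<in> KK" and a: "0 < a \<and> a < 1 \<and> a *\<^sub>R x + (1 - a) *\<^sub>R y \<in> FF"
  have hx: "0 \<le> snd x - pz (fst x)" using K_z[OF x] by simp
  have hy: "0 \<le> snd y - pz (fst y)" using K_z[OF y] by simp
  have "pz (fst (a *\<^sub>R x + (1 - a) *\<^sub>R y)) = snd (a *\<^sub>R x + (1 - a) *\<^sub>R y)"
    using a by (simp add: FF_def)
  then have "a * (snd x - pz (fst x)) + (1 - a) * (snd y - pz (fst y)) = 0"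
    by (simp add: algebra_simps)
  moreover have "0 \<le> a * (snd x - pz (fst x))" using a hx by simp
  moreover have "0 \<le> (1 - a) * (snd y - pz (fst y))" using a hy by simp
  ultimately have "a * (snd x - pz (fst x)) = 0" "(1 - a) * (snd y - pz (fst y)) = 0" by linarith+
  then have "pz (fst x) = snd x" "pz (fst y) = snd y" using a by auto
  then show "x \<in> FF \<and> y \<in> FF" using K_F x y by blast
  qed
  then show ?thesis unfolding is_face_def using F_closed F_convex F_K by blast
qed


lemma dist4: "dist ((a1, a2, a3), a4) ((b1, b2, b3), b4::real) =
  sqrt ((a1 - b1)^2 + (a2 - b2)^2 + (a3 - b3)^2 + (a4 - b4)^2)"
  by (simp add: dist_norm norm_Pair add.assoc)

lemma gamma_bounds:
  fixes t :: real
  assumes t0: "0 < t" and t1: "t \<le> 1/2"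
  shows "2 * sin t ^ 2 \<le> norm (pxy (gamma_curve t)) - 1"
    and "norm (pxy (gamma_curve t)) \<le> 3"
    and "1 - pz (gamma_curve t) \<le> 3/2 * sin t ^ 4"
proof -
  define s where "s = sin t"
  define c where "c = cos t"
  have sc: "s^2 + c^2 = 1" by (simp add: s_def c_def)
  have c0: "0 < c" unfolding c_def using t0 t1 pi_gt3 by (intro cos_gt_zero) auto
  have c1: "c \<le> 1" by (simp add: c_def)
  have "pxy (gamma_curve t) = (1 - 4 * s^2, 4 * s * c)"
    by (simp add: gamma_curve_def s_def c_def cos_double_sin sin_double)
  then have "norm (pxy (gamma_curve t)) ^ 2 = (1 - 4 * s^2)^2 + (4 * s * c)^2"
    by (simp add: norm_Pair)
  also have "\<dots> = 1 + 8 * s^2"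
  proof -
    have c2: "c^2 = 1 - s^2" using sc by simp
    have "(4 * s * c)^2 = 16 * s^2 * c^2" by (simp add: power_mult_distrib)
    also have "\<dots> = 16 * s^2 * (1 - s^2)" by (simp add: c2)
    finally show ?thesis by (simp add: power2_eq_square algebra_simps)
  qed
  finally have nsq: "norm (pxy (gamma_curve t)) ^ 2 = 1 + 8 * s^2" .
  define n where "n = norm (pxy (gamma_curve t))"
  have n0: "0 \<le> n" by (simp add: n_def)
  have s1: "s^2 \<le> 1" using sc zero_le_power2[of c] by linarith
  have "n^2 \<le> 3^2" using nsq s1 by (simp add: n_def)
  then show n3: "norm (pxy (gamma_curve t)) \<le> 3" unfolding n_def[symmetric]
    by (rule power2_le_imp_le) simp
  have "1^2 \<le> n^2" using nsq by (simp add: n_def)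
  then have n1: "1 \<le> n" using n0 by (rule power2_le_imp_le)
  have "8 * s^2 = (n - 1) * (n + 1)" using nsq by (simp add: n_def power2_eq_square algebra_simps)
  also have "\<dots> \<le> (n - 1) * 4" using n1 n3 by (intro mult_left_mono) (auto simp: n_def)
  finally show "2 * sin t ^ 2 \<le> norm (pxy (gamma_curve t)) - 1" by (simp add: n_def s_def)
  have "1 - pz (gamma_curve t) = (1 - c)^2 * (c + 2) / 2"
  proof -
    have "(1 - c)^2 * (c + 2) = 2 - 3*c + c^3" by (simp add: power2_eq_square power3_eq_cube algebra_simps)
    moreover have "1 - (3 * c - c ^ 3) / 2 = (2 - 3*c + c^3) / 2" by (simp add: field_simps)
    ultimately show ?thesis unfolding gamma_z c_def[symmetric] by simp
  qed
  also have "\<dots> \<le> (s^2)^2 * 3 / 2"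
  proof -
    have "(1 - c) * (1 + c) = s^2" using sc by (simp add: power2_eq_square algebra_simps)
    then have "1 - c \<le> s^2" using c0 c1
      by (smt (verit) mult_le_cancel_left1)
    then have "(1 - c)^2 \<le> (s^2)^2" using c1 by (intro power_mono) auto
    then show ?thesis using c0 c1 by (intro divide_right_mono mult_mono) auto
  qed
  finally show "1 - pz (gamma_curve t) \<le> 3/2 * sin t ^ 4" by (simp add: s_def)
qed

theorem proposition5p2:
  shows "\<not> amenable (cone_of (C_set \<times> {1::real}))"
proof
  assume "amenable (cone_of (C_set \<times> {1::real}))"
  then obtain k where k0: "k > 0" and kk: "\<forall>x\<in>span FF. infdist x FF \<le> k * infdist x KK"
    using F_face unfolding amenable_def by blast
  define t where "t = 1 / (2 * k + 2)"
  have t0: "0 < t" and t1: "t \<le> 1/2" using k0 by (auto simp: t_def field_simps)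
  have kt: "k * t \<le> 1/2" using k0 by (simp add: t_def field_simps)
  define s where "s = sin t"
  have s0: "0 < s" unfolding s_def using t0 t1 pi_gt3 by (intro sin_gt_zero) auto
  have st: "s \<le> t" unfolding s_def using t0 by (intro sin_x_le_x) simp
  obtain g1 g2 g3 where G: "gamma_curve t = (g1, g2, g3)" by (metis prod.collapse)
  have b1: "2 * s^2 \<le> norm (g1, g2) - 1" and b2: "norm (g1, g2) \<le> 3"
    and b3: "1 - g3 \<le> 3/2 * s^4"
    using gamma_bounds[OF t0 t1] G by (simp_all add: s_def)
  have GC: "(g1, g2, g3) \<in> C_set"
  proof -
    have "gamma_curve t \<in> Gen" unfolding Gen_def using t0 t1 pi_gt3 by auto
    then show ?thesis unfolding G C_set_def Gen_def[symmetric] by (rule hull_inc)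
  qed
  define X where "X = (((g1, g2, 1), 1) :: (real \<times> real \<times> real) \<times> real)"
  have AF: "((g1, g2, 3), 3) \<in> FF" using b2 by (simp add: FF_def)
  have BF: "(((0::real), (0::real), (2::real)), (2::real)) \<in> FF" by (simp add: FF_def)
  have Xe: "X = ((g1, g2, 3), 3) - ((0, 0, 2), 2)" by (simp add: X_def)
  have XS: "X \<in> span FF" unfolding Xe by (intro span_diff span_base AF BF)
  have "((g1, g2, g3), 1) \<in> KK"
  proof -
    have "((g1, g2, g3), 1) = (1::real) *\<^sub>R ((g1, g2, g3), (1::real))" by simp
    moreover have "((g1, g2, g3), (1::real)) \<in> C_set \<times> {1}" using GC by simp
    moreover have "(0::real) \<le> 1" by simp
    ultimately show ?thesis unfolding cone_of_def by blast
  qed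
  then have "infdist X KK \<le> dist X ((g1, g2, g3), 1)" by (rule infdist_le)
  also have "\<dots> = \<bar>1 - g3\<bar>" by (simp add: X_def dist4)
  also have "\<dots> = 1 - g3" using C_z[OF GC] by simp
  finally have dK: "infdist X KK \<le> 3/2 * s^4" using b3 by linarith
  have dF: "s^2 \<le> infdist X FF"
  proof -
    have "FF \<noteq> {}" using BF by blast
    then have e: "infdist X FF = (INF y\<in>FF. dist X y)" by (rule infdist_notempty)
    show ?thesis unfolding e
    proof (rule cINF_greatest)
      show "FF \<noteq> {}" using BF by blast
    next
      fix Y assume Y: "Y \<in> FF"
      obtain y1 y2 y3 y4 where Ye: "Y = ((y1, y2, y3), y4)" by (metis prod.collapse)
      have ny: "norm (y1, y2) \<le> y4" using Y Ye by (simp add: FF_def)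
      define d where "d = dist X Y"
      have dd: "d = sqrt ((g1 - y1)^2 + (g2 - y2)^2 + (1 - y3)^2 + (1 - y4)^2)"
        by (simp add: d_def X_def Ye dist4)
      have d1: "norm ((g1, g2) - (y1, y2)) \<le> d"
        unfolding dd by (simp add: norm_Pair)
      have "\<bar>1 - y4\<bar> = sqrt ((1 - y4)^2)" by simp
      also have "\<dots> \<le> d" unfolding dd by (rule real_sqrt_le_mono) simp
      finally have d2: "\<bar>1 - y4\<bar> \<le> d" .
      have "norm (g1, g2) \<le> norm ((g1, g2) - (y1, y2)) + norm (y1, y2)"
        using norm_triangle_sub[of "(g1, g2)" "(y1, y2)"] by (simp add: add.commute)
      then have "norm (g1, g2) - 1 \<le> 2 * d" using d1 d2 ny by linarith
      then show "s^2 \<le> dist X Y" using b1 by (simp add: d_def)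
    qed
  qed
  have "s^2 \<le> k * (3/2 * s^4)"
    using dF kk XS dK k0 by (meson order_trans mult_left_mono less_imp_le)
  then have "s^2 * 1 \<le> s^2 * (3/2 * k * s^2)" by (simp add: power4_eq_xxxx power2_eq_square algebra_simps)
  then have "1 \<le> 3/2 * k * s^2" using s0 by (simp add: mult_le_cancel_left)
  moreover have "k * s^2 \<le> 1/4"
  proof -
    have "s^2 \<le> t * t" using st s0 by (simp add: power2_eq_square mult_mono)
    then have "k * s^2 \<le> (k * t) * t" using k0 by (simp add: mult.assoc mult_left_mono)
    also have "\<dots> \<le> (1/2) * (1/2)" using kt t1 t0 k0 by (intro mult_mono) auto
    finally show ?thesis by simp
  qed
  ultimately show False by linarith
qed

end
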